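(* Let $(X,d_X)$, $\delta,\epsilon,R$ and $F\colon\mathbb{H}^n\to X$ satisfy hypotheses (1)–(4) of the following criterion: (1) each $F\circ\eta_x$ is a geodesic; (2) for distinct $x,x'$, $F\circ\eta_x$ and $F\circ\eta_{x'}$ are two sides of an ideal $\delta$-slim triangle in $X$; (3) $e^{-t}|x-x'|<\epsilon$ implies $d_X(F(x,t),F(x',t))\le R$; (4) $e^{-t_k}|x_k-x_k'|\to\infty$ implies $d_X(F(x_k,t_k),F(x_k',t_k))\to\infty$. Put $\Delta=\max\{3\delta,\,2R/\epsilon+R\}$. Then for every vertical triangle $T=\mathcal{P}\cup\mathcal{Q}\cup\mathcal{R}\subset\mathbb{H}^n$, with $x=x(\mathcal{P})$, $x'=x(\mathcal{Q})$, $$d_X\big(F(x,h_T),F(x',h_T)\big)\le 3\Delta.$$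
   Context: Exponential model $\mathbb{H}^n=\mathbb{R}^{n-1}\times\mathbb{R}$, coordinates $(x,t)$, metric $e^{-2t}|dx|^2+dt^2$; vertical geodesics $\eta_x(t)=(x,t)$. An ideal $\delta$-slim triangle: three bi-infinite geodesics forming an ideal triangle, each side in the closed $\delta$-neighborhood of the union of the other two. A vertical triangle $T=\mathcal{P}\cup\mathcal{Q}\cup\mathcal{R}$ is an ideal triangle in $\mathbb{H}^n$ whose sides $\mathcal{P}=\eta_x(\mathbb{R})$, $\mathcal{Q}=\eta_{x'}(\mathbb{R})$ ($x\neq x'$) are vertical and whose third side $\mathcal{R}$ joins their other endpoints; $x(\mathcal{P})=x$, $x(\mathcal{Q})=x'$. The midpoint $r$ of $\mathcal{R}$ is the point of $\mathcal{R}$ with maximal $t$-coordinate $t(r)$ (so $e^{-t(r)}|x-x'|=2$). The displaced height of $T$ is $h_T=\min\{t\in\mathbb{R} : d_X(F(x,t),F(\mathcal{Q}))\le\Delta \text{ or } d_X(F(\mathcal{P}),F(x',t))\le\Delta\}$, a finite number satisfying $h_T\le t(r)$. *)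

theory Defs
  imports "HOL-Analysis.Analysis"
begin

definition geodesic_line :: "(real \<Rightarrow> 'a::metric_space) \<Rightarrow> bool" where
  "geodesic_line g \<longleftrightarrow> (\<forall>s t. dist (g s) (g t) = \<bar>s - t\<bar>)"

text \<open>The forward end of g and the backward end of h define the same point at infinity:
  the rays t \<mapsto> g t and t \<mapsto> h (-t), t \<ge> 0, are asymptotic (stay at bounded distance).\<close>
definition ends_asymptotic :: "(real \<Rightarrow> 'a::metric_space) \<Rightarrow> (real \<Rightarrow> 'a) \<Rightarrow> bool" where
  "ends_asymptotic g h \<longleftrightarrow> (\<exists>C. \<forall>t\<ge>0. dist (g t) (h (- t)) \<le> C)"

text \<open>Ideal triangle with sides a, b, c (bi-infinite geodesics, each with either orientation):
  consecutive sides share an endpoint at infinity.\<close>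
definition ideal_triangle :: "(real \<Rightarrow> 'a::metric_space) \<Rightarrow> (real \<Rightarrow> 'a) \<Rightarrow> (real \<Rightarrow> 'a) \<Rightarrow> bool" where
  "ideal_triangle a b c \<longleftrightarrow> geodesic_line a \<and> geodesic_line b \<and> geodesic_line c \<and>
     (\<exists>sa sb sc. sa \<in> {1, -1} \<and> sb \<in> {1, -1} \<and> sc \<in> {1, -1} \<and>
        ends_asymptotic (\<lambda>t. a (sa * t)) (\<lambda>t. b (sb * t)) \<and>
        ends_asymptotic (\<lambda>t. b (sb * t)) (\<lambda>t. c (sc * t)) \<and>
        ends_asymptotic (\<lambda>t. c (sc * t)) (\<lambda>t. a (sa * t)))"

definition slim_triangle :: "real \<Rightarrow> (real \<Rightarrow> 'a::metric_space) \<Rightarrow> (real \<Rightarrow> 'a) \<Rightarrow> (real \<Rightarrow> 'a) \<Rightarrow> bool" where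
  "slim_triangle \<delta> a b c \<longleftrightarrow>
     (\<forall>s. infdist (a s) (range b \<union> range c) \<le> \<delta>) \<and>
     (\<forall>s. infdist (b s) (range a \<union> range c) \<le> \<delta>) \<and>
     (\<forall>s. infdist (c s) (range a \<union> range b) \<le> \<delta>)"

definition ideal_slim_triangle :: "real \<Rightarrow> (real \<Rightarrow> 'a::metric_space) \<Rightarrow> (real \<Rightarrow> 'a) \<Rightarrow> (real \<Rightarrow> 'a) \<Rightarrow> bool" where
  "ideal_slim_triangle \<delta> a b c \<longleftrightarrow> ideal_triangle a b c \<and> slim_triangle \<delta> a b c"

text \<open>Exponential model of H^n = R^(n-1) x R; the R^(n-1) factor is real^'n.
  Vertical geodesic eta_x(t) = (x,t).\<close>
definition vert :: "real^'n \<Rightarrow> real \<Rightarrow> (real^'n) \<times> real" where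
  "vert x t = (x, t)"

definition displaced_height ::
  "((real^'n) \<times> real \<Rightarrow> 'a::metric_space) \<Rightarrow> real \<Rightarrow> real^'n \<Rightarrow> real^'n \<Rightarrow> real" where
  "displaced_height F \<Delta> x x' =
     (LEAST t. infdist (F (x, t)) (range (\<lambda>s. F (x', s))) \<le> \<Delta> \<or>
               infdist (F (x', t)) (range (\<lambda>s. F (x, s))) \<le> \<Delta>)"

end

theory Submission
  imports Defs
begin

lemma geo_cont: "geodesic_line g \<Longrightarrow> continuous_on UNIV g"
  unfolding continuous_on_iff geodesic_line_def
  by (metis dist_real_def)

lemma infdist_lt_ex:
  assumes "infdist p (range h) < e"
  shows "\<exists>s. dist p (h s) < e"
proof -
  have "(INF a\<in>range h. dist p a) < e" using assms by (simp add: infdist_notempty)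
  then show ?thesis by (simp add: cINF_less_iff)
qed

lemma key:
  fixes g h :: "real \<Rightarrow> 'a::metric_space"
  assumes g: "geodesic_line g" and h: "geodesic_line h"
    and top: "\<And>t. \<exists>T\<ge>t. dist (g T) (h T) \<le> R"
    and d: "dist (g t) (h s) \<le> D"
  shows "dist (g t) (h t) \<le> 2 * D + R"
proof -
  obtain T where T: "T \<ge> max t s" "dist (g T) (h T) \<le> R" using top by blast
  have gg: "\<And>a b. dist (g a) (g b) = \<bar>a - b\<bar>" and hh: "\<And>a b. dist (h a) (h b) = \<bar>a - b\<bar>"
    using g h by (auto simp: geodesic_line_def)
  have "dist (h s) (h T) \<le> dist (h s) (g t) + dist (g t) (g T) + dist (g T) (h T)"
    using dist_triangle[of "h s" "h T" "g t"] dist_triangle[of "g t" "h T" "g T"] by linarith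
  hence 1: "t - s \<le> D + R" using T d gg[of t T] hh[of s T] by (simp add: dist_commute)
  have "dist (g t) (g T) \<le> dist (g t) (h s) + dist (h s) (h T) + dist (h T) (g T)"
    using dist_triangle[of "g t" "g T" "h s"] dist_triangle[of "h s" "g T" "h T"] by linarith
  hence 2: "s - t \<le> D + R" using T d gg[of t T] hh[of s T] by (simp add: dist_commute)
  have "dist (g t) (h t) \<le> dist (g t) (h s) + dist (h s) (h t)" by (rule dist_triangle)
  also have "\<dots> \<le> D + \<bar>s - t\<bar>" using d hh by simp
  finally show ?thesis using 1 2 by linarith
qed

lemma key2:
  fixes g h :: "real \<Rightarrow> 'a::metric_space"
  assumes g: "geodesic_line g" and h: "geodesic_line h"
    and top: "\<And>t. \<exists>T\<ge>t. dist (g T) (h T) \<le> R"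
    and d: "infdist (g t) (range h) \<le> D"
  shows "dist (g t) (h t) \<le> 2 * D + R"
proof (rule field_le_epsilon)
  fix e :: real assume e: "e > 0"
  obtain s where "dist (g t) (h s) < D + e/2" using infdist_lt_ex[of "g t" h "D + e/2"] d e by force
  from key[OF g h top, of t s "D + e/2"] this show "dist (g t) (h t) \<le> 2 * D + R + e" by simp
qed

theorem claim2p3:
  fixes F :: "(real^'n) \<times> real \<Rightarrow> 'a::metric_space"
    and \<delta> \<epsilon> R :: real
  assumes eps_pos: "\<epsilon> > 0"
    and H1: "\<And>x. geodesic_line (F \<circ> vert x)"
    and H2: "\<And>x x'. x \<noteq> x' \<Longrightarrow> \<exists>c. ideal_slim_triangle \<delta> (F \<circ> vert x) (F \<circ> vert x') c"
    and H3: "\<And>x x' t. exp (- t) * norm (x - x') < \<epsilon> \<Longrightarrow> dist (F (x, t)) (F (x', t)) \<le> R"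
    and H4: "\<And>xs xs' ts. filterlim (\<lambda>k. exp (- ts k) * norm (xs k - xs' k)) at_top sequentially \<Longrightarrow>
               filterlim (\<lambda>k. dist (F (xs k, ts k)) (F (xs' k, ts k))) at_top sequentially"
    and x_ne: "x \<noteq> x'"
  shows "dist (F (x, displaced_height F (max (3 * \<delta>) (2 * R / \<epsilon> + R)) x x'))
               (F (x', displaced_height F (max (3 * \<delta>) (2 * R / \<epsilon> + R)) x x'))
           \<le> 3 * max (3 * \<delta>) (2 * R / \<epsilon> + R)"
proof -
  define \<Delta> where "\<Delta> = max (3 * \<delta>) (2 * R / \<epsilon> + R)"
  define g where "g = (\<lambda>t. F (x, t))"
  define h where "h = (\<lambda>t. F (x', t))"
  have g: "geodesic_line g" and h: "geodesic_line h"
    using H1[of x] H1[of x'] by (auto simp: g_def h_def comp_def vert_def)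
  define n where "n = norm (x - x')"
  have n: "n > 0" using x_ne by (simp add: n_def)
  have topT: "\<exists>T\<ge>t. exp (- T) * n < \<epsilon>" for t
  proof -
    define T where "T = \<bar>t\<bar> + \<bar>ln (\<epsilon> / n)\<bar> + 1"
    have "exp (- T) < exp (ln (\<epsilon> / n))" unfolding T_def by simp
    hence "exp (- T) < \<epsilon> / n" using eps_pos n by simp
    hence "exp (- T) * n < \<epsilon>" using n by (simp add: field_simps)
    moreover have "T \<ge> t" unfolding T_def by simp
    ultimately show ?thesis by blast
  qed
  have top: "\<exists>T\<ge>t. dist (g T) (h T) \<le> R" for t
    using topT[of t] H3[of _ x x'] by (auto simp: g_def h_def n_def)
  have top': "\<exists>T\<ge>t. dist (h T) (g T) \<le> R" for t
    using top[of t] by (simp add: dist_commute)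
  have R0: "R \<ge> 0" using top[of 0] by (meson order_trans zero_le_dist)
  have RD: "R \<le> \<Delta>" unfolding \<Delta>_def using R0 eps_pos by (simp add: le_max_iff_disj)
  define P where "P = (\<lambda>t. infdist (g t) (range h) \<le> \<Delta> \<or> infdist (h t) (range g) \<le> \<Delta>)"
  have Pbound: "P t \<Longrightarrow> dist (g t) (h t) \<le> 2 * \<Delta> + R" for t
    unfolding P_def using key2[OF g h top] key2[OF h g top'] by (auto simp: dist_commute)
  define S where "S = {t. P t}"
  have Sne: "S \<noteq> {}"
  proof -
    obtain T where "dist (g T) (h T) \<le> R" using top by blast
    hence "infdist (g T) (range h) \<le> \<Delta>" using RD by (meson infdist_le2 order_trans rangeI)
    thus ?thesis by (auto simp: S_def P_def)
  qed
  have Scl: "closed S"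
  proof -
    have "S = {t. infdist (g t) (range h) \<le> \<Delta>} \<union> {t. infdist (h t) (range g) \<le> \<Delta>}"
      by (auto simp: S_def P_def)
    moreover have "closed {t. infdist (g t) (range h) \<le> \<Delta>}"
      by (intro closed_Collect_le continuous_on_infdist geo_cont g continuous_on_const)
    moreover have "closed {t. infdist (h t) (range g) \<le> \<Delta>}"
      by (intro closed_Collect_le continuous_on_infdist geo_cont h continuous_on_const)
    ultimately show ?thesis by auto
  qed
  have Sbdd: "bdd_below S"
  proof (rule ccontr)
    assume "\<not> bdd_below S"
    hence "\<forall>k::nat. \<exists>t\<in>S. t \<le> - real k" unfolding bdd_below_def
    proof (intro allI)
      fix k :: nat
      assume "\<nexists>M. \<forall>x\<in>S. M \<le> x"
      hence "\<not> (\<forall>t\<in>S. - real k \<le> t)" by blast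
      thus "\<exists>t\<in>S. t \<le> - real k" by force
    qed
    then obtain ts where ts: "\<And>k. ts k \<in> S" "\<And>k. ts k \<le> - real k" by metis
    have lim1: "filterlim (\<lambda>k. real k * n) at_top sequentially"
      by (rule filterlim_at_top_mult_tendsto_pos[OF tendsto_const n filterlim_real_sequentially])
    have "filterlim (\<lambda>k. exp (- ts k) * norm ((\<lambda>k. x) k - (\<lambda>k. x') k)) at_top sequentially"
    proof (rule filterlim_at_top_mono[OF lim1])
      show "\<forall>\<^sub>F k in sequentially. real k * n \<le> exp (- ts k) * norm (x - x')"
      proof (rule always_eventually, rule allI)
        fix k
        have "real k \<le> exp (real k)" using exp_ge_add_one_self[of "real k"] by linarith
        also have "\<dots> \<le> exp (- ts k)" using ts(2)[of k] by simp
        finally show "real k * n \<le> exp (- ts k) * norm (x - x')" using n by (simp add: n_def mult_right_mono)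
      qed
    qed
    from H4[OF this] have "filterlim (\<lambda>k. dist (g (ts k)) (h (ts k))) at_top sequentially"
      by (simp add: g_def h_def)
    hence "\<forall>\<^sub>F k in sequentially. dist (g (ts k)) (h (ts k)) \<ge> 2 * \<Delta> + R + 1"
      by (simp add: filterlim_at_top)
    then obtain k where "dist (g (ts k)) (h (ts k)) \<ge> 2 * \<Delta> + R + 1"
      by (meson eventually_sequentially order_refl)
    moreover have "dist (g (ts k)) (h (ts k)) \<le> 2 * \<Delta> + R" using ts(1)[of k] Pbound by (simp add: S_def)
    ultimately show False by linarith
  qed
  have InfS: "Inf S \<in> S" using closed_contains_Inf[OF Sne Sbdd Scl] .
  have least: "(LEAST t. P t) = Inf S"
  proof (rule Least_equality)
    show "P (Inf S)" using InfS by (simp add: S_def)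
    show "\<And>y. P y \<Longrightarrow> Inf S \<le> y" using Sbdd by (auto simp: S_def intro: cInf_lower)
  qed
  have dh: "displaced_height F \<Delta> x x' = Inf S"
    unfolding displaced_height_def least[symmetric] P_def g_def h_def by simp
  have "dist (g (Inf S)) (h (Inf S)) \<le> 2 * \<Delta> + R" using Pbound InfS by (simp add: S_def)
  hence "dist (g (Inf S)) (h (Inf S)) \<le> 3 * \<Delta>" using RD by linarith
  thus ?thesis using dh by (simp add: \<Delta>_def g_def h_def)
qed

end
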